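(* Let $M=\{(x,y,z)\in\mathbb{C}^3: x^2+y^2+z^2=3xyz\}$ and let $\varphi^z_t$ denote the flow (defined for all $t\in\mathbb{C}$) of the vector field $V^z=(2y-3xz)\partial_x-(2x-3yz)\partial_y$ on $M$. Let $(x,y,z)\in M$ with $z\neq0$ and $4-9z^2\neq0$. Then the map \[ \mathbb{C}\ni t\mapsto\varphi^z_t(x,y,z)\in\{(u,v,z): u^2+v^2+z^2=3uvz\} \] is surjective.
   Context: The flow $\varphi^z_t$ preserves the $z$-coordinate, so its image lies in the indicated curve. *)

theory Defs
  imports "HOL-Analysis.Analysis"
begin

definition markov_M :: "(complex \<times> complex \<times> complex) set" where
  "markov_M = {(x,y,z). x^2 + y^2 + z^2 = 3*x*y*z}"

definition Vz :: "complex \<times> complex \<times> complex \<Rightarrow> complex \<times> complex \<times> complex" where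
  "Vz p = (case p of (x,y,z) \<Rightarrow> (2*y - 3*x*z, -(2*x - 3*y*z), 0))"

text \<open>gamma is an integral curve (complex time, defined on all of C) of Vz starting at p,
  i.e. t \<mapsto> gamma t is the flow line t \<mapsto> phi^z_t(p).\<close>
definition is_flow_line_Vz ::
  "(complex \<Rightarrow> complex \<times> complex \<times> complex) \<Rightarrow> complex \<times> complex \<times> complex \<Rightarrow> bool" where
  "is_flow_line_Vz \<gamma> p \<longleftrightarrow> \<gamma> 0 = p \<and>
     (\<forall>t. ((\<lambda>s. fst (\<gamma> s)) has_field_derivative fst (Vz (\<gamma> t))) (at t) \<and>
          ((\<lambda>s. fst (snd (\<gamma> s))) has_field_derivative fst (snd (Vz (\<gamma> t)))) (at t) \<and>
          ((\<lambda>s. snd (snd (\<gamma> s))) has_field_derivative snd (snd (Vz (\<gamma> t)))) (at t))"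

end

theory Submission
  imports Defs
begin

lemma deriv_zero_const:
  fixes f :: "complex \<Rightarrow> complex"
  assumes "\<And>t. (f has_field_derivative 0) (at t)"
  shows "f t = f 0"
proof -
  obtain c where "\<forall>x\<in>UNIV. f x = c"
    using has_field_derivative_zero_constant[of UNIV f] assms by auto
  then show ?thesis by simp
qed

lemma exp_sol:
  fixes f :: "complex \<Rightarrow> complex"
  assumes "\<And>t. (f has_field_derivative (m * f t)) (at t)"
  shows "f t = f 0 * exp (m * t)"
proof -
  have "((\<lambda>r. f r * exp (- (m * r))) has_field_derivative 0) (at s)" for s
  proof -
    have "((\<lambda>r. f r * exp (- (m * r))) has_field_derivative
            (m * f s) * exp (- (m * s)) + (exp (- (m * s)) * (-m)) * f s) (at s)"
      by (rule DERIV_mult[OF assms]) (auto intro!: derivative_eq_intros)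
    then show ?thesis by (simp add: algebra_simps)
  qed
  then have "f t * exp (- (m * t)) = f 0 * exp (- (m * 0))"
    by (rule deriv_zero_const)
  then have "f t * exp (- (m * t)) * exp (m * t) = f 0 * exp (m * t)" by simp
  then show ?thesis by (simp add: exp_minus field_simps)
qed

theorem lemma6p5:
  fixes x y z :: complex and \<gamma> :: "complex \<Rightarrow> complex \<times> complex \<times> complex"
  assumes "(x, y, z) \<in> markov_M" and "z \<noteq> 0" and "4 - 9 * z^2 \<noteq> 0"
    and "is_flow_line_Vz \<gamma> (x, y, z)"
  shows "range \<gamma> = {p. snd (snd p) = z \<and> (fst p)^2 + (fst (snd p))^2 + z^2 = 3 * fst p * fst (snd p) * z}"
proof -
  define U where "U t = fst (\<gamma> t)" for t
  define V where "V t = fst (snd (\<gamma> t))" for t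
  define Z where "Z t = snd (snd (\<gamma> t))" for t
  have g0: "\<gamma> 0 = (x,y,z)" using assms(4) unfolding is_flow_line_Vz_def by auto
  have VzE: "Vz (\<gamma> t) = (2 * V t - 3 * U t * Z t, -(2 * U t - 3 * V t * Z t), 0)" for t
    by (cases "\<gamma> t") (simp add: Vz_def U_def V_def Z_def)
  have fl: "\<forall>t. (U has_field_derivative fst (Vz (\<gamma> t))) (at t) \<and>
          (V has_field_derivative fst (snd (Vz (\<gamma> t)))) (at t) \<and>
          (Z has_field_derivative snd (snd (Vz (\<gamma> t)))) (at t)"
    using assms(4) unfolding is_flow_line_Vz_def U_def[abs_def] V_def[abs_def] Z_def[abs_def] by blast
  have dU: "(U has_field_derivative (2 * V t - 3 * U t * Z t)) (at t)" for t
    using fl VzE by simp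
  have dV: "(V has_field_derivative (-(2 * U t - 3 * V t * Z t))) (at t)" for t
    using fl VzE by simp
  have dZ: "(Z has_field_derivative 0) (at t)" for t
    using fl VzE by simp
  have Zc: "Z t = z" for t using deriv_zero_const[OF dZ, of t] g0 by (simp add: Z_def)
  define m where "m = csqrt (9 * z^2 - 4)"
  have m2: "m^2 = 9 * z^2 - 4" unfolding m_def by simp
  have m0: "m \<noteq> 0" using m2 assms(3) by auto
  define A where "A t = (m - 3 * z) * U t + 2 * V t" for t
  define B where "B t = (-m - 3 * z) * U t + 2 * V t" for t
  have dA: "(A has_field_derivative (m * A t)) (at t)" for t
  proof -
    have "(A has_field_derivative ((m - 3 * z) * (2 * V t - 3 * U t * z) + 2 * (-(2 * U t - 3 * V t * z)))) (at t)"
      unfolding A_def[abs_def] using dU[of t] dV[of t] Zc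
      by (auto intro!: derivative_eq_intros)
    moreover have "(m - 3 * z) * (2 * V t - 3 * U t * z) + 2 * (-(2 * U t - 3 * V t * z)) = m * A t"
      unfolding A_def using m2 by algebra
    ultimately show ?thesis by simp
  qed
  have dB: "(B has_field_derivative ((-m) * B t)) (at t)" for t
  proof -
    have "(B has_field_derivative ((-m - 3 * z) * (2 * V t - 3 * U t * z) + 2 * (-(2 * U t - 3 * V t * z)))) (at t)"
      unfolding B_def[abs_def] using dU[of t] dV[of t] Zc
      by (auto intro!: derivative_eq_intros)
    moreover have "(-m - 3 * z) * (2 * V t - 3 * U t * z) + 2 * (-(2 * U t - 3 * V t * z)) = (-m) * B t"
      unfolding B_def using m2 by algebra
    ultimately show ?thesis by simp
  qed
  have At: "A t = A 0 * exp (m * t)" for t using exp_sol[OF dA] .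
  have Bt: "B t = B 0 * exp (-m * t)" for t using exp_sol[OF dB] .
  have key: "((m - 3 * z) * u + 2 * v) * ((-m - 3 * z) * u + 2 * v) = 4 * (u^2 + v^2 - 3 * u * v * z)" for u v
    using m2 by algebra
  have M: "x^2 + y^2 + z^2 = 3 * x * y * z" using assms(1) by (simp add: markov_M_def)
  have AB0: "A 0 * B 0 = - 4 * z^2"
  proof -
    have "U 0 = x" "V 0 = y" using g0 by (simp_all add: U_def V_def)
    then have "A 0 * B 0 = 4 * (x^2 + y^2 - 3 * x * y * z)" unfolding A_def B_def key by simp
    also have "\<dots> = - 4 * z^2" using M by algebra
    finally show ?thesis .
  qed
  have ABt: "A t * B t = - 4 * z^2" for t
    using AB0 At[of t] Bt[of t] by (simp add: algebra_simps exp_minus)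
  have UV: "U t = (A t - B t) / (2 * m)" "V t = (A t - (m - 3 * z) * U t) / 2" for t
    using m0 unfolding A_def B_def by (simp_all add: field_simps)
  show ?thesis
  proof (intro equalityI subsetI)
    fix p assume "p \<in> range \<gamma>"
    then obtain t where p: "p = \<gamma> t" by auto
    have "4 * (U t^2 + V t^2 - 3 * U t * V t * z) = -4 * z^2"
      using ABt[of t] unfolding A_def B_def key by simp
    then have "U t^2 + V t^2 + z^2 = 3 * U t * V t * z" by algebra
    then show "p \<in> {p. snd (snd p) = z \<and> (fst p)^2 + (fst (snd p))^2 + z^2 = 3 * fst p * fst (snd p) * z}"
      using Zc[of t] unfolding p U_def V_def Z_def by simp
  next
    fix p assume "p \<in> {p. snd (snd p) = z \<and> (fst p)^2 + (fst (snd p))^2 + z^2 = 3 * fst p * fst (snd p) * z}"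
    then obtain u v where p: "p = (u,v,z)" and F: "u^2 + v^2 + z^2 = 3 * u * v * z"
      by (cases p) auto
    define a where "a = (m - 3 * z) * u + 2 * v"
    define b where "b = (-m - 3 * z) * u + 2 * v"
    have ab: "a * b = -4 * z^2" unfolding a_def b_def key using F by algebra
    have a0: "a \<noteq> 0" using ab assms(2) by auto
    have A00: "A 0 \<noteq> 0" using AB0 assms(2) by auto
    define t where "t = Ln (a / A 0) / m"
    have e: "exp (m * t) = a / A 0" unfolding t_def using m0 a0 A00 by simp
    have "A t = a" using At[of t] e A00 by simp
    moreover have "B t = b"
    proof -
      have "B t = B 0 / exp (m * t)" using Bt[of t] by (simp add: exp_minus divide_inverse)
      also have "\<dots> = B 0 * A 0 / a" using e a0 A00 by simp
      also have "\<dots> = b" using AB0 ab a0 by (simp add: field_simps)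
      finally show ?thesis .
    qed
    ultimately have ABe: "A t = a" "B t = b" .
    have "2 * m * U t = 2 * m * u"
    proof -
      have "2 * m * U t = A t - B t" unfolding A_def B_def by algebra
      also have "\<dots> = a - b" using ABe by simp
      also have "\<dots> = 2 * m * u" unfolding a_def b_def by algebra
      finally show ?thesis .
    qed
    then have Uu: "U t = u" using m0 by simp
    have "2 * V t = 2 * v"
    proof -
      have "2 * V t = A t - (m - 3 * z) * U t" unfolding A_def by algebra
      also have "\<dots> = a - (m - 3 * z) * u" using ABe Uu by simp
      also have "\<dots> = 2 * v" unfolding a_def by algebra
      finally show ?thesis .
    qed
    then have "V t = v" by simp
    note Uu this
    then have "\<gamma> t = p" using Zc[of t] unfolding p U_def V_def Z_def by (simp add: prod_eq_iff)
    then show "p \<in> range \<gamma>" by (metis rangeI)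
  qed
qed

end
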